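(* Let $\tilde p\in\mathbb{R}^{dn}$ be a target formation (i.e. $\|\tilde p_i-\tilde p_j\|=d_{ij}$ for all $(i,j)\in\mathcal{E}$ and $\tilde p_j-\tilde p_i=\hat p_j-\hat p_i$ for all $(i,j)\in\mathcal{E}_o$) which is infinitesimally rigid, and suppose the orientation edges are selected as follows: all edges of $\mathcal{E}_o$ are incident to a common agent $i_0$; if $d=2$, $\mathcal{E}_o\neq\emptyset$; if $d=3$, $\mathcal{E}_o$ contains two edges $(i_0,j),(i_0,j')$ whose desired vectors $\hat p_j-\hat p_{i_0}$ and $\hat p_{j'}-\hat p_{i_0}$ are linearly independent. Then the matrix \[ \mathcal{F}:=R(\tilde p)^TR(\tilde p)+L_o\otimes I_d \] is positive semidefinite and has exactly $d$ zero eigenvalues; moreover $\mathrm{null}(\mathcal{F})=\mathrm{null}(H\otimes I_d)=\mathrm{span}(\mathbf{1}_n\otimes I_d)$ (the column span of $\mathbf{1}_n\otimes I_d$).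
   Context: Let $d\in\{2,3\}$, $n\ge2$. $\mathcal{G}=(\mathcal{V},\mathcal{E})$ is an undirected graph on $\{1,\dots,n\}$ with $m$ edges, each edge $k$ given an arbitrary orientation (head $j$, tail $i$); $H\in\mathbb{R}^{m\times n}$ is the incidence matrix ($h_{ki}=1$ if edge $k$ sinks at $i$, $-1$ if it leaves $i$, $0$ otherwise). For $p\in\mathbb{R}^{dn}$, $z=(H\otimes I_d)p$ with $z_k=p_j-p_i$, $Z(z)=\mathrm{diag}(z_1,\dots,z_m)\in\mathbb{R}^{dm\times m}$ block diagonal, and the rigidity matrix is $R(p)=Z(z)^T(H\otimes I_d)$. The framework $(\mathcal{G},p)$ is infinitesimally rigid iff $\mathrm{rank}\,R(p)=dn-d(d+1)/2$. Edges carry desired distances $d_{ij}>0$. $\mathcal{E}_o\subseteq\mathcal{E}$ is a set of orientation edges, $L_o$ the Laplacian of the undirected graph $(\mathcal{V},\mathcal{E}_o)$, and for each $(i,j)\in\mathcal{E}_o$ a desired relative vector $\hat p_j-\hat p_i\in\mathbb{R}^d$ with $\|\hat p_j-\hat p_i\|=d_{ij}$ is prescribed. $\mathbf{1}_n$ is the all-ones vector. *)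

theory Defs
  imports "Jordan_Normal_Form.Jordan_Normal_Form" "Jordan_Normal_Form.DL_Rank" "Jordan_Normal_Form.Matrix_Kernel"
begin

definition kron :: "'a::times mat \<Rightarrow> 'a mat \<Rightarrow> 'a mat" where
  "kron A B = mat (dim_row A * dim_row B) (dim_col A * dim_col B)
     (\<lambda>(i,j). A $$ (i div dim_row B, j div dim_col B) * B $$ (i mod dim_row B, j mod dim_col B))"

text \<open>Vertices are 0..n-1. Edge k of the list E is the pair (tail i, head j).
  Incidence matrix: entry 1 at the head (sink), -1 at the tail.\<close>
definition incidence :: "nat \<Rightarrow> (nat \<times> nat) list \<Rightarrow> real mat" where
  "incidence n E = mat (length E) n
     (\<lambda>(k,i). if i = snd (E ! k) then 1 else if i = fst (E ! k) then -1 else 0)"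

definition agent_pos :: "nat \<Rightarrow> real vec \<Rightarrow> nat \<Rightarrow> real vec" where
  "agent_pos d p i = vec d (\<lambda>a. p $ (i * d + a))"

definition edge_vec :: "nat \<Rightarrow> (nat \<times> nat) list \<Rightarrow> real vec \<Rightarrow> nat \<Rightarrow> real vec" where
  "edge_vec d E p k = agent_pos d p (snd (E ! k)) - agent_pos d p (fst (E ! k))"

text \<open>Z(z) = diag(z_1,...,z_m), a (d m) x m block diagonal matrix.\<close>
definition Zmat :: "nat \<Rightarrow> (nat \<times> nat) list \<Rightarrow> real vec \<Rightarrow> real mat" where
  "Zmat d E p = mat (d * length E) (length E)
     (\<lambda>(r,c). if r div d = c then edge_vec d E p c $ (r mod d) else 0)"

definition rigidity_matrix :: "nat \<Rightarrow> nat \<Rightarrow> (nat \<times> nat) list \<Rightarrow> real vec \<Rightarrow> real mat" where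
  "rigidity_matrix d n E p = transpose_mat (Zmat d E p) * kron (incidence n E) (1\<^sub>m d)"

definition inf_rigid :: "nat \<Rightarrow> nat \<Rightarrow> (nat \<times> nat) list \<Rightarrow> real vec \<Rightarrow> bool" where
  "inf_rigid d n E p \<longleftrightarrow>
     vec_space.rank (length E) (rigidity_matrix d n E p) = d * n - d * (d + 1) div 2"

definition adj_o :: "(nat \<times> nat) set \<Rightarrow> nat \<Rightarrow> nat \<Rightarrow> bool" where
  "adj_o Eo i j \<longleftrightarrow> i \<noteq> j \<and> ((i,j) \<in> Eo \<or> (j,i) \<in> Eo)"

definition laplacian :: "nat \<Rightarrow> (nat \<times> nat) set \<Rightarrow> real mat" where
  "laplacian n Eo = mat n n (\<lambda>(i,j).
     if i = j then real (card {k. k < n \<and> adj_o Eo i k})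
     else if adj_o Eo i j then -1 else 0)"

definition psd :: "real mat \<Rightarrow> bool" where
  "psd A \<longleftrightarrow> A \<in> carrier_mat (dim_row A) (dim_row A) \<and> transpose_mat A = A \<and>
     (\<forall>x \<in> carrier_vec (dim_row A). 0 \<le> x \<bullet> (A *\<^sub>v x))"

definition vnorm :: "real vec \<Rightarrow> real" where
  "vnorm v = sqrt (v \<bullet> v)"

definition lin_indep2 :: "real vec \<Rightarrow> real vec \<Rightarrow> bool" where
  "lin_indep2 u v \<longleftrightarrow> (\<forall>a b. a \<cdot>\<^sub>v u + b \<cdot>\<^sub>v v = 0\<^sub>v (dim_vec u) \<longrightarrow> a = 0 \<and> b = 0)"

definition ones_kron_I :: "nat \<Rightarrow> nat \<Rightarrow> real mat" where
  "ones_kron_I n d = kron (mat n 1 (\<lambda>_. 1)) (1\<^sub>m d)"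

end

theory Submission
  imports Defs
begin

lemma sum_blocks: "(\<Sum>r<n*d. f r) = (\<Sum>i<n. \<Sum>a<d. f (i*d + a :: nat))"
proof (induction n)
  case 0 then show ?case by simp
next
  case (Suc n)
  have "(\<Sum>r<Suc n*d. f r) = (\<Sum>r<n*d. f r) + (\<Sum>r\<in>{n*d..<n*d+d}. f r)"
    by (simp add: add.commute lessThan_atLeast0 sum.atLeastLessThan_concat)
  also have "(\<Sum>r\<in>{n*d..<n*d+d}. f r) = (\<Sum>a<d. f (n*d + a))"
    by (simp add: atLeast0LessThan[symmetric] sum.shift_bounds_nat_ivl[symmetric] add.commute)
  finally show ?case using Suc by simp
qed

lemma blk_less: "i < n \<Longrightarrow> a < d \<Longrightarrow> i*d + a < n*(d::nat)"
proof -
  assume "i < n" "a < d"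
  hence "i*d + a < i*d + d" by simp
  also have "\<dots> = Suc i * d" by simp
  also have "\<dots> \<le> n * d" using \<open>i < n\<close> by (intro mult_le_mono1) simp
  finally show ?thesis .
qed

lemma blk_div[simp]: "a < d \<Longrightarrow> (i*d + a) div d = (i::nat)" by simp
lemma blk_mod[simp]: "a < d \<Longrightarrow> (i*d + a) mod d = (a::nat)" by simp

lemma kron_I_mult:
  fixes A :: "real mat"
  assumes A: "A \<in> carrier_mat r n" and x: "x \<in> carrier_vec (n*d)" and d: "0 < d"
  shows "kron A (1\<^sub>m d) *\<^sub>v x = vec (r*d) (\<lambda>q. \<Sum>i<n. A$$(q div d, i) * x$(i*d + q mod d))"
proof (rule eq_vecI)
  show "dim_vec (kron A (1\<^sub>m d) *\<^sub>v x) = dim_vec (vec (r*d) (\<lambda>q. \<Sum>i<n. A$$(q div d, i) * x$(i*d + q mod d)))"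
    using A by (simp add: kron_def)
  fix q assume "q < dim_vec (vec (r*d) (\<lambda>q. \<Sum>i<n. A$$(q div d, i) * x$(i*d + q mod d)))"
  hence q: "q < r*d" by simp
  have qd: "q mod d < d" using d by simp
  have "(kron A (1\<^sub>m d) *\<^sub>v x) $ q = (\<Sum>c<n*d. kron A (1\<^sub>m d) $$ (q,c) * x $ c)"
    using A x q by (simp add: kron_def scalar_prod_def row_def atLeast0LessThan)
  also have "\<dots> = (\<Sum>i<n. \<Sum>a<d. A$$(q div d, i) * (if q mod d = a then 1 else 0) * x$(i*d+a))"
    unfolding sum_blocks using A q d
    by (intro sum.cong refl, auto simp: kron_def blk_less)
  also have "\<dots> = (\<Sum>i<n. A$$(q div d, i) * x$(i*d + q mod d))"
  proof (intro sum.cong refl)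
    fix i
    have "(\<Sum>a<d. A$$(q div d, i) * (if q mod d = a then 1 else 0) * x$(i*d+a))
       = (\<Sum>a<d. if a = q mod d then A$$(q div d, i) * x$(i*d+a) else 0)"
      by (intro sum.cong refl) auto
    also have "\<dots> = A$$(q div d, i) * x$(i*d + q mod d)" using qd by (simp add: sum.delta)
    finally show "(\<Sum>a<d. A$$(q div d, i) * (if q mod d = a then 1 else 0) * x$(i*d+a)) = A$$(q div d, i) * x$(i*d + q mod d)" .
  qed
  finally show "(kron A (1\<^sub>m d) *\<^sub>v x) $ q = vec (r*d) (\<lambda>q. \<Sum>i<n. A$$(q div d, i) * x$(i*d + q mod d)) $ q"
    using q by simp
qed

lemma incidence_carrier[simp]: "incidence n E \<in> carrier_mat (length E) n"
  by (simp add: incidence_def)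

lemma incidence_sum:
  assumes k: "k < length E" and wf: "fst (E!k) < n" "snd (E!k) < n" "fst (E!k) \<noteq> snd (E!k)"
  shows "(\<Sum>i<n. incidence n E $$ (k,i) * y i) = y (snd (E!k)) - y (fst (E!k))"
proof -
  have "(\<Sum>i<n. incidence n E $$ (k,i) * y i) =
     (\<Sum>i<n. (if i = snd (E!k) then y i else 0) - (if i = fst (E!k) then y i else 0))"
    using k wf by (intro sum.cong refl) (auto simp: incidence_def)
  also have "\<dots> = y (snd (E!k)) - y (fst (E!k))" using wf by (simp add: sum_subtractf sum.delta)
  finally show ?thesis .
qed

lemma M_mult:
  assumes wf: "\<forall>(i,j)\<in>set E. i < n \<and> j < n \<and> i \<noteq> j"
    and x: "x \<in> carrier_vec (n*d)" and d: "0 < d"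
  shows "kron (incidence n E) (1\<^sub>m d) *\<^sub>v x = vec (length E * d)
     (\<lambda>q. x$(snd(E!(q div d))*d + q mod d) - x$(fst(E!(q div d))*d + q mod d))"
  unfolding kron_I_mult[OF incidence_carrier x d]
proof (rule eq_vecI, simp_all)
  fix q assume q: "q < length E * d"
  hence k: "q div d < length E" by (simp add: less_mult_imp_div_less)
  hence "E!(q div d) \<in> set E" by simp
  hence w: "fst (E!(q div d)) < n" "snd (E!(q div d)) < n" "fst (E!(q div d)) \<noteq> snd (E!(q div d))"
    using wf by auto
  show "(\<Sum>i<n. incidence n E $$ (q div d, i) * x $ (i * d + q mod d)) =
         x $ (snd (E ! (q div d)) * d + q mod d) - x $ (fst (E ! (q div d)) * d + q mod d)"
    by (rule incidence_sum[OF k w])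
qed

lemma edge_vec_index: "a < d \<Longrightarrow> edge_vec d E p k $ a = p$(snd(E!k)*d + a) - p$(fst(E!k)*d + a)"
  by (simp add: edge_vec_def agent_pos_def)

lemma edge_vec_carrier[simp]: "edge_vec d E p k \<in> carrier_vec d"
  by (simp add: edge_vec_def agent_pos_def)

lemma Zmat_carrier[simp]: "Zmat d E p \<in> carrier_mat (d * length E) (length E)"
  by (simp add: Zmat_def)

lemma ZT_mult:
  assumes w: "w \<in> carrier_vec (length E * d)" and d: "0 < d"
  shows "transpose_mat (Zmat d E p) *\<^sub>v w = vec (length E) (\<lambda>k. \<Sum>a<d. edge_vec d E p k $ a * w$(k*d+a))"
proof (rule eq_vecI)
  fix k assume "k < dim_vec (vec (length E) (\<lambda>k. \<Sum>a<d. edge_vec d E p k $ a * w$(k*d+a)))"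
  hence k: "k < length E" by simp
  have bnd: "\<And>k' a. k' < length E \<Longrightarrow> a < d \<Longrightarrow> k'*d + a < d * length E"
    using blk_less by (metis mult.commute)
  have "(transpose_mat (Zmat d E p) *\<^sub>v w) $ k = (\<Sum>r<length E * d. Zmat d E p $$ (r,k) * w$r)"
    using k w by (simp add: scalar_prod_def Zmat_def atLeast0LessThan mult.commute)
  also have "\<dots> = (\<Sum>k'<length E. \<Sum>a<d. if k' = k then edge_vec d E p k $ a * w$(k*d+a) else 0)"
    unfolding sum_blocks using k d by (intro sum.cong refl) (auto simp: Zmat_def bnd)
  also have "\<dots> = (\<Sum>a<d. edge_vec d E p k $ a * w$(k*d+a))"
    using k by (subst sum.swap) (simp add: sum.delta)
  finally show "(transpose_mat (Zmat d E p) *\<^sub>v w) $ k = vec (length E) (\<lambda>k. \<Sum>a<d. edge_vec d E p k $ a * w$(k*d+a)) $ k"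
    using k by simp
qed (simp add: Zmat_def)

lemma R_mult:
  assumes wf: "\<forall>(i,j)\<in>set E. i < n \<and> j < n \<and> i \<noteq> j"
    and x: "x \<in> carrier_vec (n*d)" and d: "0 < d"
  shows "rigidity_matrix d n E p *\<^sub>v x = vec (length E)
     (\<lambda>k. \<Sum>a<d. edge_vec d E p k $ a * (x$(snd(E!k)*d + a) - x$(fst(E!k)*d + a)))"
proof -
  have ZT: "transpose_mat (Zmat d E p) \<in> carrier_mat (length E) (length E * d)"
    by (simp add: mult.commute)
  have M: "kron (incidence n E) (1\<^sub>m d) \<in> carrier_mat (length E * d) (n * d)"
    by (simp add: kron_def incidence_def)
  have "rigidity_matrix d n E p *\<^sub>v x = transpose_mat (Zmat d E p) *\<^sub>v (kron (incidence n E) (1\<^sub>m d) *\<^sub>v x)"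
    unfolding rigidity_matrix_def by (rule assoc_mult_mat_vec[OF ZT M x])
  also have "\<dots> = vec (length E)
     (\<lambda>k. \<Sum>a<d. edge_vec d E p k $ a * (x$(snd(E!k)*d + a) - x$(fst(E!k)*d + a)))"
    unfolding M_mult[OF wf x d] 
    by (subst ZT_mult[OF _ d], simp, intro eq_vecI, auto intro!: sum.cong simp: blk_less)
  finally show ?thesis .
qed

lemma rank_nullity_mat:
  fixes A :: "'a::field mat"
  assumes A: "A \<in> carrier_mat nr nc"
  shows "vec_space.rank nr A + kernel.dim nc A = nc"
proof -
  interpret V: vec_space "TYPE('a)" nc .
  interpret W: vec_space "TYPE('a)" nr .
  interpret K: kernel nr nc A by (unfold_locales, rule A)
  have lm: "linear_map class_ring (module_vec TYPE('a) nc) (module_vec TYPE('a) nr) (\<lambda>v. A *\<^sub>v v)"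
    unfolding linear_map_def mod_hom_def mod_hom_axioms_def module_hom_def
    apply (intro conjI)
    using V.vectorspace_axioms W.vectorspace_axioms V.module_axioms W.module_axioms
    by (auto simp: module_vec_simps class_ring_simps mult_add_distrib_mat_vec[OF A] mult_mat_vec[OF A] A intro: mult_mat_vec_carrier[OF A])
  interpret L: linear_map class_ring "module_vec TYPE('a) nc" "module_vec TYPE('a) nr" "\<lambda>v. A *\<^sub>v v"
    by (rule lm)
  have rn: "vectorspace.dim class_ring (W.vs L.imT) + vectorspace.dim class_ring (V.vs L.kerT) = V.dim"
    by (rule L.rank_nullity, simp)
  have im: "L.imT = W.span (set (cols A))"
    using W.col_space_eq[OF A] A unfolding W.col_space_def L.im_def
    by (auto simp: module_vec_simps)
  have ker: "L.kerT = mat_kernel A"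
    unfolding L.ker_def mat_kernel_def using A by (auto simp: module_vec_simps)
  show ?thesis using rn unfolding im ker W.rank_def V.dim_is_n by simp
qed

lemma indep_le_kernel_dim:
  fixes A :: "'a::field mat"
  assumes A: "A \<in> carrier_mat nr nc"
    and S: "S \<subseteq> mat_kernel A" and li: "\<not> LinearCombinations.module.lin_dep class_ring (module_vec TYPE('a) nc) S"
  shows "card S \<le> kernel.dim nc A"
proof -
  interpret K: kernel nr nc A by (unfold_locales, rule A)
  obtain Bs where Bs: "finite Bs" "K.basis Bs" using kernel_basis_exists[OF A] by auto
  have fd: "K.Ker.fin_dim" unfolding K.Ker.fin_dim_def using Bs unfolding K.Ker.basis_def by auto
  have "\<not> K.Ker.lin_dep S" using K.lindep_same[OF S] li by simp
  then show ?thesis using K.Ker.li_le_dim(2)[OF fd S] by simp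
qed

lemma inj_cols_le_kernel_dim:
  fixes A :: "'a::field mat"
  assumes A: "A \<in> carrier_mat nr nc" and B: "B \<in> carrier_mat nc k"
    and inj: "\<And>c. c \<in> carrier_vec k \<Longrightarrow> B *\<^sub>v c = 0\<^sub>v nc \<Longrightarrow> c = 0\<^sub>v k"
    and kerc: "\<And>j. j < k \<Longrightarrow> A *\<^sub>v col B j = 0\<^sub>v nr"
  shows "k \<le> kernel.dim nc A"
proof -
  interpret V: vec_space "TYPE('a)" nc .
  have colB: "\<And>i. i < k \<Longrightarrow> B *\<^sub>v unit_vec k i = col B i"
    using B by (intro eq_vecI, auto simp: scalar_prod_right_unit)
  have dist: "distinct (cols B)"
  proof (rule ccontr)
    assume "\<not> distinct (cols B)"
    then obtain i j where ij: "i < k" "j < k" "i \<noteq> j" "col B i = col B j"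
      using B unfolding distinct_conv_nth by (auto simp: cols_def)
    let ?c = "unit_vec k i - unit_vec k j :: 'a vec"
    have "B *\<^sub>v ?c = B *\<^sub>v unit_vec k i - B *\<^sub>v unit_vec k j"
      using B by (simp add: mult_minus_distrib_mat_vec)
    also have "\<dots> = 0\<^sub>v nc" using colB ij B by auto
    finally have eq: "B *\<^sub>v ?c = 0\<^sub>v nc" .
    have cc: "?c \<in> carrier_vec k" by simp
    have "?c = 0\<^sub>v k" using inj[OF cc eq] .
    hence "?c $ i = 0" using ij by simp
    thus False using ij by simp
  qed
  have li: "\<not> V.lin_dep (set (cols B))"
  proof
    assume "V.lin_dep (set (cols B))"
    then obtain v where "v \<in> carrier_vec k" "v \<noteq> 0\<^sub>v k" "B *\<^sub>v v = 0\<^sub>v nc"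
      using V.lin_depE[OF B _ dist] by blast
    thus False using inj by auto
  qed
  have S: "set (cols B) \<subseteq> mat_kernel A"
  proof
    fix v assume "v \<in> set (cols B)"
    then obtain i where i: "i < k" "v = col B i" using B by (auto simp: cols_def)
    show "v \<in> mat_kernel A" unfolding i(2)
      using kerc[OF i(1)] A B i by (intro mat_kernelI[OF A], auto)
  qed
  have "card (set (cols B)) = k" using distinct_card[OF dist] B by simp
  thus ?thesis using indep_le_kernel_dim[OF A S li] by simp
qed

lemma cols_le_rank:
  fixes A :: "'a::field mat"
  assumes A: "A \<in> carrier_mat nr nc" and B: "B \<in> carrier_mat nc k"
    and inj: "\<And>c. c \<in> carrier_vec k \<Longrightarrow> B *\<^sub>v c = 0\<^sub>v nc \<Longrightarrow> c = 0\<^sub>v k"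
    and kerc: "\<And>j. j < k \<Longrightarrow> A *\<^sub>v col B j = 0\<^sub>v nr"
  shows "k + vec_space.rank nr A \<le> nc"
  using inj_cols_le_kernel_dim[OF A B inj kerc] rank_nullity_mat[OF A] by simp

lemma R_carrier: "rigidity_matrix d n E p \<in> carrier_mat (length E) (n*d)"
proof -
  have ZT: "transpose_mat (Zmat d E p) \<in> carrier_mat (length E) (length E * d)"
    by (simp add: mult.commute)
  have M: "kron (incidence n E) (1\<^sub>m d) \<in> carrier_mat (length E * d) (n * d)"
    by (simp add: kron_def incidence_def)
  show ?thesis unfolding rigidity_matrix_def using ZT M by (rule mult_carrier_mat)
qed

lemma core2:
  fixes pt x :: "real vec"
  assumes wf: "\<forall>(i,j)\<in>set E. i < n \<and> j < n \<and> i \<noteq> j"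
  and x: "x \<in> carrier_vec (n*2)"
  and Rx: "rigidity_matrix 2 n E pt *\<^sub>v x = 0\<^sub>v (length E)"
  and rk: "vec_space.rank (length E) (rigidity_matrix 2 n E pt) = 2*n - 3"
  and ab: "a < n" "b < n" "pt$(b*2) - pt$(a*2) \<noteq> 0 \<or> pt$(b*2+1) - pt$(a*2+1) \<noteq> 0"
  and xa: "\<forall>e<2. x$(a*2+e) = x$(i0*2+e)" and xb: "\<forall>e<2. x$(b*2+e) = x$(i0*2+e)"
  shows "\<forall>i<n. \<forall>e<2. x$(i*2+e) = x$(i0*2+e)"
proof (rule ccontr)
  assume "\<not> ?thesis"
  then obtain i1 e1 where i1: "i1 < n" "e1 < 2" "x$(i1*2+e1) \<noteq> x$(i0*2+e1)" by auto
  let ?R = "rigidity_matrix 2 n E pt"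
  define y where "y = (\<lambda>q. x$q - x$(i0*2 + q mod 2))"
  define B where "B = mat (n*2) 4 (\<lambda>(q,c). if c = 0 then (if q mod 2 = 0 then 1 else 0)
     else if c = 1 then (if q mod 2 = 1 then 1 else 0)
     else if c = 2 then (if q mod 2 = 0 then - pt$((q div 2)*2+1) else pt$((q div 2)*2))
     else y q)"
  have Bc: "B \<in> carrier_mat (n*2) 4" by (simp add: B_def)
  have Bent: "\<And>i e c. i < n \<Longrightarrow> e < 2 \<Longrightarrow> c < 4 \<Longrightarrow> B $$ (i*2+e, c) =
     (if c = 0 then (if e = 0 then 1 else 0)
     else if c = 1 then (if e = 1 then 1 else 0)
     else if c = 2 then (if e = 0 then - pt$(i*2+1) else pt$(i*2))
     else x$(i*2+e) - x$(i0*2+e))"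
    unfolding B_def y_def using blk_less by auto
  have inj: "c = 0\<^sub>v 4" if c: "c \<in> carrier_vec 4" and Bz: "B *\<^sub>v c = 0\<^sub>v (n*2)" for c
  proof -
    have ev: "(\<Sum>j<4. B $$ (i*2+e, j) * c$j) = 0" if "i < n" "e < 2" for i e
    proof -
      have "i*2+e < n*2" using that blk_less by auto
      hence "(B *\<^sub>v c) $ (i*2+e) = 0" using Bz by simp
      thus ?thesis using Bc c \<open>i*2+e < n*2\<close> by (simp add: scalar_prod_def atLeast0LessThan)
    qed
    have e4: "(\<Sum>j<(4::nat). f j) = f 0 + f 1 + f 2 + (f 3 :: real)" for f
      by (simp add: eval_nat_numeral)
    have xa': "x$(a*2) = x$(i0*2)" "x$(Suc (a*2)) = x$(Suc (i0*2))" using xa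
      by (metis add_0_right zero_less_numeral, metis Suc_eq_plus1 one_less_numeral_iff semiring_norm(76))
    have xb': "x$(b*2) = x$(i0*2)" "x$(Suc (b*2)) = x$(Suc (i0*2))" using xb
      by (metis add_0_right zero_less_numeral, metis Suc_eq_plus1 one_less_numeral_iff semiring_norm(76))
    have a0: "c$0 - pt$(a*2+1) * c$2 = 0" using ev[OF ab(1), of 0] xa' Bent[OF ab(1), of 0] unfolding e4 by simp
    have a1: "c$1 + pt$(a*2) * c$2 = 0" using ev[OF ab(1), of 1] xa' Bent[OF ab(1), of 1] unfolding e4 by simp
    have b0: "c$0 - pt$(b*2+1) * c$2 = 0" using ev[OF ab(2), of 0] xb' Bent[OF ab(2), of 0] unfolding e4 by simp
    have b1: "c$1 + pt$(b*2) * c$2 = 0" using ev[OF ab(2), of 1] xb' Bent[OF ab(2), of 1] unfolding e4 by simp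
    have "(pt$(b*2+1) - pt$(a*2+1)) * c$2 = 0" unfolding left_diff_distrib using a0 b0 by linarith
    moreover have "(pt$(b*2) - pt$(a*2)) * c$2 = 0" unfolding left_diff_distrib using a1 b1 by linarith
    ultimately have c2: "c$2 = 0" using ab(3) by auto
    have c0: "c$0 = 0" using a0 c2 by simp
    have c1: "c$1 = 0" using a1 c2 by simp
    have "(x$(i1*2+e1) - x$(i0*2+e1)) * c$3 = 0"
      using ev[OF i1(1,2)] Bent[OF i1(1,2)] unfolding e4 using i1 c0 c1 c2 by simp
    hence c3: "c$3 = 0" using i1 by simp
    show ?thesis
    proof (rule eq_vecI)
      fix j assume "j < dim_vec (0\<^sub>v 4 :: real vec)"
      hence "j < 4" by simp
      hence "j = 0 \<or> j = 1 \<or> j = 2 \<or> j = 3" by auto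
      thus "c $ j = 0\<^sub>v 4 $ j" using c0 c1 c2 c3 \<open>j < 4\<close> by auto
    qed (use c in auto)
  qed
  have kerc: "?R *\<^sub>v col B j = 0\<^sub>v (length E)" if j: "j < 4" for j
  proof -
    have colc: "col B j \<in> carrier_vec (n*2)" using Bc by (simp add: carrier_vecI)
    show ?thesis unfolding R_mult[OF wf colc, simplified]
    proof (rule eq_vecI, simp_all)
      fix k assume k: "k < length E"
      hence "E!k \<in> set E" by simp
      hence w: "fst (E!k) < n" "snd (E!k) < n" using wf by auto
      have bl: "\<And>i e. i < n \<Longrightarrow> e < 2 \<Longrightarrow> i*2+e < n*2" using blk_less by auto
      have Rk: "(\<Sum>a<2. edge_vec 2 E pt k $ a * (x $ (snd (E ! k) * 2 + a) - x $ (fst (E ! k) * 2 + a))) = 0"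
        using arg_cong[OF Rx, of "\<lambda>v. v $ k"] k unfolding R_mult[OF wf x, simplified] by simp
      define sk where "sk = snd (E!k)"
      define fk where "fk = fst (E!k)"
      have sum2: "(\<Sum>a<(2::nat). h a) = h 0 + h 1" for h :: "nat \<Rightarrow> real"
        by (simp add: numeral_2_eq_2)
      have cB: "col B j $ (i*2+e) = B$$(i*2+e, j)" if "i < n" "e < 2" for i e
        using Bc j bl[OF that] by simp
      have ez: "edge_vec 2 E pt k $ 0 = pt$(sk*2) - pt$(fk*2)"
              "edge_vec 2 E pt k $ 1 = pt$(sk*2+1) - pt$(fk*2+1)"
        by (simp_all add: edge_vec_index sk_def fk_def)
      have Rk': "(pt$(sk*2) - pt$(fk*2)) * (x$(sk*2) - x$(fk*2)) +
                 (pt$(sk*2+1) - pt$(fk*2+1)) * (x$(sk*2+1) - x$(fk*2+1)) = 0"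
        using Rk unfolding sum2 sk_def[symmetric] fk_def[symmetric] ez by simp
      have B0: "B$$(i*2+0, j) = (if j=0 then 1 else if j=1 then 0 else if j=2 then -pt$(i*2+1) else x$(i*2+0) - x$(i0*2+0))"
        if "i < n" for i using Bent[OF that, of 0 j] j by simp
      have B1: "B$$(i*2+1, j) = (if j=0 then 0 else if j=1 then 1 else if j=2 then pt$(i*2) else x$(i*2+1) - x$(i0*2+1))"
        if "i < n" for i using Bent[OF that, of 1 j] j by simp
      have "(\<Sum>a<2. edge_vec 2 E pt k $ a * (col B j $ (sk * 2 + a) - col B j $ (fk * 2 + a)))
         = (pt$(sk*2) - pt$(fk*2)) * (B$$(sk*2+0,j) - B$$(fk*2+0,j)) +
           (pt$(sk*2+1) - pt$(fk*2+1)) * (B$$(sk*2+1,j) - B$$(fk*2+1,j))"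
        unfolding sum2 ez using cB[of sk 0] cB[of fk 0] cB[of sk 1] cB[of fk 1] w
        unfolding sk_def[symmetric] fk_def[symmetric] by simp
      also have "\<dots> = 0"
        unfolding B0[OF w(2)[folded sk_def]] B0[OF w(1)[folded fk_def]]
          B1[OF w(2)[folded sk_def]] B1[OF w(1)[folded fk_def]]
        using Rk' by (auto simp: algebra_simps)
      finally show "(\<Sum>a<2. edge_vec 2 E pt k $ a *
               (col B j $ (snd (E ! k) * 2 + a) - col B j $ (fst (E ! k) * 2 + a))) = 0"
        unfolding sk_def fk_def .
    qed
  qed
  have "4 + vec_space.rank (length E) ?R \<le> n*2"
    by (rule cols_le_rank[OF R_carrier Bc inj kerc])
  thus False unfolding rk using ab by simp
qed

lemma cross_zero:
  fixes w0 w1 w2 v0 v1 v2 u0 u1 u2 :: real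
  assumes v: "w1*v2 - w2*v1 = 0" "w2*v0 - w0*v2 = 0" "w0*v1 - w1*v0 = 0"
    and u: "w1*u2 - w2*u1 = 0" "w2*u0 - w0*u2 = 0" "w0*u1 - w1*u0 = 0"
    and ind: "\<And>\<alpha> \<beta>. \<alpha>*v0 + \<beta>*u0 = 0 \<Longrightarrow> \<alpha>*v1 + \<beta>*u1 = 0 \<Longrightarrow> \<alpha>*v2 + \<beta>*u2 = 0 \<Longrightarrow> \<alpha> = 0 \<and> \<beta> = 0"
  shows "w0 = 0 \<and> w1 = 0 \<and> w2 = 0"
proof -
  define W where "W = w0*w0 + w1*w1 + w2*w2"
  define s where "s = w0*v0 + w1*v1 + w2*v2"
  define t where "t = w0*u0 + w1*u1 + w2*u2"
  have lv: "W*v0 = s*w0" "W*v1 = s*w1" "W*v2 = s*w2"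
  proof -
    have "W*v0 - s*w0 = w2*(w2*v0 - w0*v2) - w1*(w0*v1 - w1*v0)" unfolding W_def s_def by (simp add: algebra_simps)
    thus "W*v0 = s*w0" using v by simp
    have "W*v1 - s*w1 = w0*(w0*v1 - w1*v0) - w2*(w1*v2 - w2*v1)" unfolding W_def s_def by (simp add: algebra_simps)
    thus "W*v1 = s*w1" using v by simp
    have "W*v2 - s*w2 = w1*(w1*v2 - w2*v1) - w0*(w2*v0 - w0*v2)" unfolding W_def s_def by (simp add: algebra_simps)
    thus "W*v2 = s*w2" using v by simp
  qed
  have lu: "W*u0 = t*w0" "W*u1 = t*w1" "W*u2 = t*w2"
  proof -
    have "W*u0 - t*w0 = w2*(w2*u0 - w0*u2) - w1*(w0*u1 - w1*u0)" unfolding W_def t_def by (simp add: algebra_simps)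
    thus "W*u0 = t*w0" using u by simp
    have "W*u1 - t*w1 = w0*(w0*u1 - w1*u0) - w2*(w1*u2 - w2*u1)" unfolding W_def t_def by (simp add: algebra_simps)
    thus "W*u1 = t*w1" using u by simp
    have "W*u2 - t*w2 = w1*(w1*u2 - w2*u1) - w0*(w2*u0 - w0*u2)" unfolding W_def t_def by (simp add: algebra_simps)
    thus "W*u2 = t*w2" using u by simp
  qed
  have e: "(t*W)*p + (-(s*W))*q = t*(W*p) - s*(W*q)" for p q by (simp add: algebra_simps)
  have "(t*W)*v0 + (-(s*W))*u0 = 0" "(t*W)*v1 + (-(s*W))*u1 = 0" "(t*W)*v2 + (-(s*W))*u2 = 0"
    unfolding e lv lu by (simp_all add: algebra_simps)
  from ind[OF this] have tW: "t*W = 0" and sW: "s*W = 0" by auto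
  have W0: "W = 0"
  proof (rule ccontr)
    assume W: "W \<noteq> 0"
    hence "s = 0" using sW by simp
    hence "W*v0 = 0" "W*v1 = 0" "W*v2 = 0" using lv by auto
    hence "v0 = 0" "v1 = 0" "v2 = 0" using W by auto
    hence "1*v0 + 0*u0 = 0" "1*v1 + 0*u1 = 0" "1*v2 + 0*u2 = 0" by auto
    from ind[OF this] show False by simp
  qed
  have "w0*w0 \<ge> 0" "w1*w1 \<ge> 0" "w2*w2 \<ge> 0" by auto
  hence "w0*w0 = 0" "w1*w1 = 0" "w2*w2 = 0" using W0 unfolding W_def by linarith+
  thus ?thesis by simp
qed

lemma laplacian_carrier: "laplacian n Eo \<in> carrier_mat n n"
  by (simp add: laplacian_def)

lemma adj_o_sym: "adj_o Eo i j = adj_o Eo j i"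
  unfolding adj_o_def by auto

lemma adj_o_irrefl[simp]: "\<not> adj_o Eo i i"
  unfolding adj_o_def by auto

lemma laplacian_entry: "i < n \<Longrightarrow> j < n \<Longrightarrow> laplacian n Eo $$ (i,j) =
   (if i = j then (\<Sum>k<n. if adj_o Eo i k then 1 else 0) else 0) - (if adj_o Eo i j then 1 else 0)"
proof -
  assume ij: "i < n" "j < n"
  have c: "real (card {k. k < n \<and> adj_o Eo i k}) = (\<Sum>k<n. if adj_o Eo i k then 1 else 0)"
  proof -
    have "{k. k < n \<and> adj_o Eo i k} = {k \<in> {..<n}. adj_o Eo i k}" by auto
    hence "card {k. k < n \<and> adj_o Eo i k} = (\<Sum>k\<in>{k \<in> {..<n}. adj_o Eo i k}. 1)" by simp
    also have "\<dots> = (\<Sum>k<n. if adj_o Eo i k then 1 else 0)" by (rule sum.inter_filter) simp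
    finally have "real (card {k. k < n \<and> adj_o Eo i k}) = real (\<Sum>k<n. if adj_o Eo i k then 1 else 0)" by simp
    also have "\<dots> = (\<Sum>k<n. if adj_o Eo i k then 1 else 0)" by (simp add: of_nat_sum if_distrib cong: if_cong)
    finally show ?thesis .
  qed
  show ?thesis using ij c by (auto simp: laplacian_def adj_o_def)
qed

lemma laplacian_sym: "transpose_mat (laplacian n Eo) = laplacian n Eo"
  by (rule eq_matI, auto simp: laplacian_def adj_o_def)

lemma lap_row: assumes i: "i < n"
  shows "(\<Sum>j<n. laplacian n Eo $$ (i,j) * y j) = (\<Sum>j<n. if adj_o Eo i j then y i - y j else 0)"
proof -
  have "(\<Sum>j<n. laplacian n Eo $$ (i,j) * y j) =
     (\<Sum>j<n. (if i = j then (\<Sum>k<n. if adj_o Eo i k then 1 else 0) * y j else 0) - (if adj_o Eo i j then y j else 0))"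
    using i by (intro sum.cong refl) (auto simp: laplacian_entry)
  also have "\<dots> = (\<Sum>k<n. if adj_o Eo i k then 1 else 0) * y i - (\<Sum>j<n. if adj_o Eo i j then y j else 0)"
    using i by (simp add: sum_subtractf sum.delta)
  also have "\<dots> = (\<Sum>j<n. if adj_o Eo i j then y i - y j else 0)"
    by (simp add: sum_distrib_right sum_subtractf[symmetric] if_distrib cong: if_cong)
  finally show ?thesis .
qed

lemma sq_split: "(if adj_o Eo i j then (y i - y j)^2 else 0) = (if adj_o Eo i j then y i*y i - y i*y j else 0) + (if adj_o Eo j i then y j*y j - y j*y i else (0::real))"
  using adj_o_sym[of Eo i j] by (auto simp: power2_eq_square algebra_simps)

lemma lap_quad:
  "(\<Sum>i<n. y i * (\<Sum>j<n. laplacian n Eo $$ (i,j) * y j)) =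
   (\<Sum>i<n. \<Sum>j<n. if adj_o Eo i j then (y i - y j)^2 else 0) / 2"
proof -
  let ?S = "\<lambda>i j. if adj_o Eo i j then y i * y i - y i * y j else 0"
  have 1: "(\<Sum>i<n. y i * (\<Sum>j<n. laplacian n Eo $$ (i,j) * y j)) = (\<Sum>i<n. \<Sum>j<n. ?S i j)"
  proof (intro sum.cong refl)
    fix i assume "i \<in> {..<n}"
    hence i: "i < n" by simp
    show "y i * (\<Sum>j<n. laplacian n Eo $$ (i,j) * y j) = (\<Sum>j<n. ?S i j)"
      by (simp only: lap_row[OF i] sum_distrib_left) (intro sum.cong refl, auto simp: algebra_simps)
  qed
  have 2: "(\<Sum>i<n. \<Sum>j<n. ?S i j) = (\<Sum>i<n. \<Sum>j<n. ?S j i)" by (rule sum.swap)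
  have 3: "(\<Sum>i<n. \<Sum>j<n. if adj_o Eo i j then (y i - y j)^2 else 0) = (\<Sum>i<n. \<Sum>j<n. ?S i j + ?S j i)"
    by (intro sum.cong refl) (rule sq_split)
  show ?thesis using 1 2 3 by (simp add: sum.distrib)
qed

lemma lap_quad_nonneg: "0 \<le> (\<Sum>i<n. y i * (\<Sum>j<n. laplacian n Eo $$ (i,j) * y j))"
  unfolding lap_quad by (intro divide_nonneg_pos sum_nonneg) auto

lemma lap_quad_zero: assumes "(\<Sum>i<n. y i * (\<Sum>j<n. laplacian n Eo $$ (i,j) * y j)) = 0"
  and "i < n" "j < n" "adj_o Eo i j"
  shows "y i = y j"
proof -
  let ?f = "\<lambda>i j. if adj_o Eo i j then (y i - y j)^2 else 0"
  have "(\<Sum>i<n. \<Sum>j<n. ?f i j) = 0" using assms(1) unfolding lap_quad by simp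
  hence "\<forall>i\<in>{..<n}. (\<Sum>j<n. ?f i j) = 0" by (subst (asm) sum_nonneg_eq_0_iff) (auto intro: sum_nonneg)
  hence "\<forall>i\<in>{..<n}. \<forall>j\<in>{..<n}. ?f i j = 0" by (auto simp: sum_nonneg_eq_0_iff)
  hence "?f i j = 0" using assms(2,3) by (meson lessThan_iff)
  hence "(y i - y j)^2 = 0" using assms by simp
  thus ?thesis by simp
qed

lemma core3:
  fixes pt x :: "real vec"
  assumes wf: "\<forall>(i,j)\<in>set E. i < n \<and> j < n \<and> i \<noteq> j"
  and x: "x \<in> carrier_vec (n*3)"
  and Rx: "rigidity_matrix 3 n E pt *\<^sub>v x = 0\<^sub>v (length E)"
  and rk: "vec_space.rank (length E) (rigidity_matrix 3 n E pt) = 3*n - 6"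
  and n: "n \<ge> 2"
  and ab: "a < n" "b < n" "a' < n" "b' < n"
  and ind: "\<And>\<alpha> \<beta>. (\<And>e. e < 3 \<Longrightarrow> \<alpha>*(pt$(b*3+e) - pt$(a*3+e)) + \<beta>*(pt$(b'*3+e) - pt$(a'*3+e)) = 0)
              \<Longrightarrow> \<alpha> = 0 \<and> \<beta> = 0"
  and xa: "\<forall>e<3. x$(a*3+e) = x$(i0*3+e)" and xb: "\<forall>e<3. x$(b*3+e) = x$(i0*3+e)"
  and xa': "\<forall>e<3. x$(a'*3+e) = x$(i0*3+e)" and xb': "\<forall>e<3. x$(b'*3+e) = x$(i0*3+e)"
  shows "\<forall>i<n. \<forall>e<3. x$(i*3+e) = x$(i0*3+e)"
proof (rule ccontr)
  assume "\<not> ?thesis"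
  then obtain i1 e1 where i1: "i1 < n" "e1 < 3" "x$(i1*3+e1) \<noteq> x$(i0*3+e1)" by auto
  let ?R = "rigidity_matrix 3 n E pt"
  define X where "X = (\<lambda>i e. x$(i*3+e))"
  define P where "P = (\<lambda>i e. pt$(i*3+e))"
  define g where "g = (\<lambda>i e c. if c < 3 then (if e = c then 1 else 0)
     else if c = 3 then (if e = 0 then 0 else if e = 1 then - P i 2 else P i 1)
     else if c = 4 then (if e = 0 then P i 2 else if e = 1 then 0 else - P i 0)
     else if c = 5 then (if e = 0 then - P i 1 else if e = 1 then P i 0 else 0)
     else X i e - X i0 e)"
  define B where "B = mat (n*3) 7 (\<lambda>(q,c). g (q div 3) (q mod 3) c)"
  have Bc: "B \<in> carrier_mat (n*3) 7" by (simp add: B_def)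
  have bl: "\<And>i e. i < n \<Longrightarrow> e < 3 \<Longrightarrow> i*3+e < n*3" using blk_less by auto
  have Bent: "B $$ (i*3+e, c) = g i e c" if "i < n" "e < 3" "c < 7" for i e c
    unfolding B_def using that bl[OF that(1,2)] by simp
  have sum3: "(\<Sum>a<(3::nat). h a) = h 0 + h 1 + h 2" for h :: "nat \<Rightarrow> real"
    by (simp add: eval_nat_numeral)
  have sum7: "(\<Sum>a<(7::nat). h a) = h 0 + h 1 + h 2 + h 3 + h 4 + h 5 + h 6" for h :: "nat \<Rightarrow> real"
    by (simp add: eval_nat_numeral)
  have inj: "c = 0\<^sub>v 7" if c: "c \<in> carrier_vec 7" and Bz: "B *\<^sub>v c = 0\<^sub>v (n*3)" for c
  proof -
    have ev: "(\<Sum>j<7. g i e j * c$j) = 0" if "i < n" "e < 3" for i e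
    proof -
      have "(B *\<^sub>v c) $ (i*3+e) = 0" using Bz bl[OF that] by simp
      hence "(\<Sum>j<7. B $$ (i*3+e, j) * c$j) = 0"
        using Bc c bl[OF that] by (simp add: scalar_prod_def atLeast0LessThan)
      thus ?thesis using Bent[OF that] by simp
    qed
    have eqs: "c$0 + c$4 * P u 2 - c$5 * P u 1 = 0"
              "c$1 + c$5 * P u 0 - c$3 * P u 2 = 0"
              "c$2 + c$3 * P u 1 - c$4 * P u 0 = 0"
      if "u < n" "\<forall>e<3. X u e = X i0 e" for u
    proof -
      have "X u 0 = X i0 0" "X u 1 = X i0 1" "X u 2 = X i0 2" using that(2) by auto
      thus "c$0 + c$4 * P u 2 - c$5 * P u 1 = 0"
              "c$1 + c$5 * P u 0 - c$3 * P u 2 = 0"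
              "c$2 + c$3 * P u 1 - c$4 * P u 0 = 0"
        using ev[OF that(1), of 0] ev[OF that(1), of 1] ev[OF that(1), of 2]
        unfolding sum7 by (simp_all add: g_def algebra_simps)
    qed
    have XA: "\<forall>e<3. X a e = X i0 e" "\<forall>e<3. X b e = X i0 e"
         "\<forall>e<3. X a' e = X i0 e" "\<forall>e<3. X b' e = X i0 e"
      using xa xb xa' xb' unfolding X_def by auto
    note ea = eqs[OF ab(1) XA(1)] and eb = eqs[OF ab(2) XA(2)]
      and ea' = eqs[OF ab(3) XA(3)] and eb' = eqs[OF ab(4) XA(4)]
    define v0 where "v0 = P b 0 - P a 0"
    define v1 where "v1 = P b 1 - P a 1"
    define v2 where "v2 = P b 2 - P a 2"
    define u0 where "u0 = P b' 0 - P a' 0"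
    define u1 where "u1 = P b' 1 - P a' 1"
    define u2 where "u2 = P b' 2 - P a' 2"
    have cv: "c$4*v2 - c$5*v1 = 0" "c$5*v0 - c$3*v2 = 0" "c$3*v1 - c$4*v0 = 0"
      unfolding v0_def v1_def v2_def right_diff_distrib using ea eb by linarith+
    have cu: "c$4*u2 - c$5*u1 = 0" "c$5*u0 - c$3*u2 = 0" "c$3*u1 - c$4*u0 = 0"
      unfolding u0_def u1_def u2_def right_diff_distrib using ea' eb' by linarith+
    have ind': "\<alpha> = 0 \<and> \<beta> = 0" if "\<alpha>*v0 + \<beta>*u0 = 0" "\<alpha>*v1 + \<beta>*u1 = 0" "\<alpha>*v2 + \<beta>*u2 = 0" for \<alpha> \<beta>
    proof (rule ind)
      fix e :: nat assume "e < 3"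
      hence "e = 0 \<or> e = 1 \<or> e = 2" by auto
      thus "\<alpha>*(pt$(b*3+e) - pt$(a*3+e)) + \<beta>*(pt$(b'*3+e) - pt$(a'*3+e)) = 0"
        using that unfolding v0_def v1_def v2_def u0_def u1_def u2_def P_def by auto
    qed
    have w: "c$3 = 0 \<and> c$4 = 0 \<and> c$5 = 0" by (rule cross_zero[OF cv cu ind'])
    have c012: "c$0 = 0" "c$1 = 0" "c$2 = 0" using ea w by auto
    have "(X i1 e1 - X i0 e1) * c$6 = 0"
    proof -
      have "e1 = 0 \<or> e1 = 1 \<or> e1 = 2" using i1 by auto
      thus ?thesis using ev[OF i1(1,2)] w c012 unfolding sum7 by (auto simp: g_def)
    qed
    hence c6: "c$6 = 0" using i1 unfolding X_def by simp
    show ?thesis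
    proof (rule eq_vecI)
      fix j assume "j < dim_vec (0\<^sub>v 7 :: real vec)"
      hence "j < 7" by simp
      hence "j = 0 \<or> j = 1 \<or> j = 2 \<or> j = 3 \<or> j = 4 \<or> j = 5 \<or> j = 6" by auto
      thus "c $ j = 0\<^sub>v 7 $ j" using c012 w c6 \<open>j < 7\<close> by auto
    qed (use c in auto)
  qed
  have kerc: "?R *\<^sub>v col B j = 0\<^sub>v (length E)" if j: "j < 7" for j
  proof -
    have colc: "col B j \<in> carrier_vec (n*3)" using Bc by (simp add: carrier_vecI)
    show ?thesis unfolding R_mult[OF wf colc, simplified]
    proof (rule eq_vecI, simp_all)
      fix k assume k: "k < length E"
      hence "E!k \<in> set E" by simp
      hence w: "fst (E!k) < n" "snd (E!k) < n" using wf by auto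
      define sk where "sk = snd (E!k)"
      define fk where "fk = fst (E!k)"
      have Rk: "(\<Sum>a<3. edge_vec 3 E pt k $ a * (x $ (snd (E ! k) * 3 + a) - x $ (fst (E ! k) * 3 + a))) = 0"
        using arg_cong[OF Rx, of "\<lambda>v. v $ k"] k unfolding R_mult[OF wf x, simplified] by simp
      have ez: "edge_vec 3 E pt k $ e = P sk e - P fk e" if "e < 3" for e
        using that by (simp add: edge_vec_index sk_def fk_def P_def)
      have Rk': "(\<Sum>a<3. (P sk a - P fk a) * (X sk a - X fk a)) = 0"
        using Rk ez unfolding sk_def[symmetric] fk_def[symmetric] X_def by simp
      have cB: "col B j $ (i*3+e) = g i e j" if "i < n" "e < 3" for i e
        using Bc j bl[OF that] Bent[OF that j] by simp
      have "(\<Sum>a<3. edge_vec 3 E pt k $ a * (col B j $ (sk * 3 + a) - col B j $ (fk * 3 + a)))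
         = (\<Sum>a<3. (P sk a - P fk a) * (g sk a j - g fk a j))"
        using cB w ez unfolding sk_def[symmetric] fk_def[symmetric] by simp
      also have "\<dots> = 0"
      proof -
        have "j = 0 \<or> j = 1 \<or> j = 2 \<or> j = 3 \<or> j = 4 \<or> j = 5 \<or> j = 6" using j by auto
        thus ?thesis using Rk' unfolding sum3 by (auto simp: g_def algebra_simps)
      qed
      finally show "(\<Sum>a<3. edge_vec 3 E pt k $ a *
               (col B j $ (snd (E ! k) * 3 + a) - col B j $ (fst (E ! k) * 3 + a))) = 0"
        unfolding sk_def fk_def .
    qed
  qed
  have "7 + vec_space.rank (length E) ?R \<le> n*3"
    by (rule cols_le_rank[OF R_carrier Bc inj kerc])
  thus False unfolding rk using n by simp
qed

lemma char_poly_zero_mat: "char_poly (0\<^sub>m d d :: 'a::field mat) = monom 1 d"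
proof -
  have "char_poly (0\<^sub>m d d :: 'a mat) = (\<Prod>a\<leftarrow>diag_mat (0\<^sub>m d d :: 'a mat). [:- a, 1:])"
    by (rule char_poly_upper_triangular[of _ d]) (auto simp: upper_triangular_def)
  also have "diag_mat (0\<^sub>m d d :: 'a mat) = replicate d 0"
    by (rule nth_equalityI) (auto simp: diag_mat_def)
  also have "(\<Prod>a\<leftarrow>replicate d (0::'a). [:- a, 1:]) = [:0, 1:] ^ d" by (simp add: prod_list_replicate)
  also have "\<dots> = monom 1 d" by (simp add: x_as_monom monom_power)
  finally show ?thesis .
qed

lemma char_poly_block_zero_cols:
  fixes B :: "'a::field mat"
  assumes B: "B \<in> carrier_mat (d+k) (d+k)" and z: "\<And>i j. i < d+k \<Longrightarrow> j < d \<Longrightarrow> B$$(i,j) = 0"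
  shows "char_poly B = monom 1 d * char_poly (mat k k (\<lambda>(i,j). B$$(d+i,d+j)))"
proof -
  define G where "G = mat k k (\<lambda>(i,j). B$$(d+i,d+j))"
  define B2 where "B2 = mat d k (\<lambda>(i,j). B$$(i,d+j))"
  have BB: "B = four_block_mat (0\<^sub>m d d) B2 (0\<^sub>m k d) G"
    by (rule eq_matI) (insert B z, auto simp: G_def B2_def four_block_mat_def)
  let ?cm = "\<lambda> A. [:0, 1:] \<cdot>\<^sub>m 1\<^sub>m (dim_row A) + map_mat (\<lambda>a. [:- a:]) A"
  have G: "G \<in> carrier_mat k k" and B2: "B2 \<in> carrier_mat d k" by (auto simp: G_def B2_def)
  have "char_poly B = det (?cm (four_block_mat (0\<^sub>m d d) B2 (0\<^sub>m k d) G))"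
    unfolding char_poly_defs BB ..
  also have "?cm (four_block_mat (0\<^sub>m d d) B2 (0\<^sub>m k d) G) =
     four_block_mat (?cm (0\<^sub>m d d)) (map_mat (\<lambda>a. [:- a:]) B2) (0\<^sub>m k d) (?cm G)"
    by (rule eq_matI, insert G B2, auto simp: one_poly_def)
  also have "det \<dots> = det (?cm (0\<^sub>m d d)) * det (?cm G)"
    by (rule det_four_block_mat_lower_left_zero[OF _ _ refl], insert G B2, auto)
  also have "\<dots> = char_poly (0\<^sub>m d d) * char_poly G" unfolding char_poly_defs ..
  finally show ?thesis unfolding char_poly_zero_mat G_def .
qed

lemma sum_split_add: "(\<Sum>j<d+k. f j) = (\<Sum>j<d. f j) + (\<Sum>j<k. f (d+j :: nat))"
proof -
  have "(\<Sum>j<d+k. f j) = (\<Sum>j<d. f j) + (\<Sum>j\<in>{d..<d+k}. f j)"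
    by (simp add: lessThan_atLeast0 sum.atLeastLessThan_concat)
  also have "(\<Sum>j\<in>{d..<d+k}. f j) = (\<Sum>j<k. f (d+j))"
    by (simp add: atLeast0LessThan[symmetric] sum.shift_bounds_nat_ivl[symmetric] add.commute)
  finally show ?thesis .
qed

lemma self_scalar_zero: fixes u :: "real vec"
  assumes u: "u \<in> carrier_vec N" and z: "u \<bullet> u = 0" shows "u = 0\<^sub>v N"
proof (rule eq_vecI)
  have "(\<Sum>i\<in>{0..<N}. u$i * u$i) = 0" using z u by (simp add: scalar_prod_def)
  hence "\<forall>i\<in>{0..<N}. u$i * u$i = 0" by (subst (asm) sum_nonneg_eq_0_iff) auto
  thus "\<And>i. i < dim_vec (0\<^sub>v N) \<Longrightarrow> u $ i = 0\<^sub>v N $ i" by auto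
qed (use u in auto)

lemma order_kernel:
  fixes F :: "real mat"
  assumes F: "F \<in> carrier_mat (n*d) (n*d)" and sym: "transpose_mat F = F"
    and d: "0 < d" and n: "1 \<le> n"
    and ker: "\<And>x. x \<in> carrier_vec (n*d) \<Longrightarrow> (F *\<^sub>v x = 0\<^sub>v (n*d)) \<longleftrightarrow> (\<forall>q<n*d. x$q = x$(q mod d))"
  shows "Polynomial.order 0 (char_poly F) = d"
proof -
  define N where "N = n*d"
  define k where "k = N - d"
  have Nk: "N = d + k" unfolding k_def N_def using n d by (simp add: add.commute le_add_diff_inverse2)
  have dN: "d \<le> N" using Nk by simp
  have F': "F \<in> carrier_mat N N" using F N_def by simp
  have ker': "\<And>x. x \<in> carrier_vec N \<Longrightarrow> (F *\<^sub>v x = 0\<^sub>v N) \<longleftrightarrow> (\<forall>q<N. x$q = x$(q mod d))"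
    using ker unfolding N_def by simp
  have modN: "q mod d < N" for q using d dN by (meson le_trans less_le_not_le mod_less_divisor not_less)
  define P where "P = mat N N (\<lambda>(i,j). if j < d then (if i mod d = j then 1 else 0) else (if i = j then 1 else (0::real)))"
  define Q where "Q = mat N N (\<lambda>(i,j). if i < d then (if i = j then 1 else 0) else (if i = j then 1 else if j = i mod d then -1 else (0::real)))"
  have Pc: "P \<in> carrier_mat N N" and Qc: "Q \<in> carrier_mat N N" by (auto simp: P_def Q_def)
  have Pe: "P $$ (i,l) = (if l = i mod d then 1 else 0) + (if d \<le> i \<and> l = i then 1 else 0)"
    if "i < N" "l < N" for i l
    using that d mod_less_divisor[OF d, of i] by (auto simp: P_def)
  have Qe: "Q $$ (i,l) = (if l = i then 1 else 0) - (if d \<le> i \<and> l = i mod d then 1 else 0)"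
    if "i < N" "l < N" for i l
    using that d mod_less_divisor[OF d, of i] by (auto simp: Q_def)
  have sdel: "(\<Sum>l<N. (if l = a then 1 else 0) * f l) = f a" if "a < N" for a and f :: "nat \<Rightarrow> real"
  proof -
    have "(\<Sum>l<N. (if l = a then 1 else 0) * f l) = (\<Sum>l<N. if l = a then f l else 0)"
      by (intro sum.cong refl) simp
    thus ?thesis using that by (simp add: sum.delta)
  qed
  have PQ: "P * Q = 1\<^sub>m N"
  proof (rule eq_matI)
    fix i j assume ij: "i < dim_row (1\<^sub>m N)" "j < dim_col (1\<^sub>m N)"
    hence i: "i < N" and j: "j < N" by auto
    have "(P * Q) $$ (i,j) = (\<Sum>l<N. P $$ (i,l) * Q $$ (l,j))"
      using Pc Qc i j by (simp add: scalar_prod_def atLeast0LessThan)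
    also have "\<dots> = (\<Sum>l<N. (if l = i mod d then 1 else 0) * Q $$ (l,j)) + (\<Sum>l<N. (if d \<le> i \<and> l = i then 1 else 0) * Q $$ (l,j))"
      using i by (simp add: Pe distrib_right sum.distrib)
    also have "\<dots> = Q $$ (i mod d, j) + (if d \<le> i then Q $$ (i,j) else 0)"
      using i modN by (cases "d \<le> i") (simp_all add: sdel)
    also have "\<dots> = 1\<^sub>m N $$ (i,j)"
      using i j d modN[of i] mod_less_divisor[OF d, of i] by (auto simp: Q_def)
    finally show "(P * Q) $$ (i,j) = 1\<^sub>m N $$ (i,j)" .
  qed (use Pc Qc in auto)
  have QP: "Q * P = 1\<^sub>m N"
  proof (rule eq_matI)
    fix i j assume ij: "i < dim_row (1\<^sub>m N)" "j < dim_col (1\<^sub>m N)"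
    hence i: "i < N" and j: "j < N" by auto
    have "(Q * P) $$ (i,j) = (\<Sum>l<N. Q $$ (i,l) * P $$ (l,j))"
      using Pc Qc i j by (simp add: scalar_prod_def atLeast0LessThan)
    also have "\<dots> = (\<Sum>l<N. (if l = i then 1 else 0) * P $$ (l,j)) - (\<Sum>l<N. (if d \<le> i \<and> l = i mod d then 1 else 0) * P $$ (l,j))"
      using i by (simp add: Qe left_diff_distrib sum_subtractf)
    also have "\<dots> = P $$ (i, j) - (if d \<le> i then P $$ (i mod d,j) else 0)"
      using i modN by (cases "d \<le> i") (simp_all add: sdel)
    also have "\<dots> = 1\<^sub>m N $$ (i,j)"
      using i j d modN[of i] mod_less_divisor[OF d, of i] by (auto simp: P_def)
    finally show "(Q * P) $$ (i,j) = 1\<^sub>m N $$ (i,j)" .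
  qed (use Pc Qc in auto)
  define B where "B = Q * (F * P)"
  have FPc: "F * P \<in> carrier_mat N N" using F' Pc by simp
  have Bc: "B \<in> carrier_mat N N" unfolding B_def using Qc FPc by simp
  have sim: "similar_mat F B"
  proof -
    have "P * B * Q = (P * Q) * F * (P * Q)"
      unfolding B_def using Pc Qc F' by (simp add: assoc_mult_mat[of _ N N _ N _ N])
    also have "\<dots> = F" unfolding PQ using F' by simp
    finally have "F = P * B * Q" by simp
    thus ?thesis unfolding similar_mat_def using similar_mat_witI[OF PQ QP _ F' Bc Pc Qc] by blast
  qed
  have colP_ker: "F *\<^sub>v col P j = 0\<^sub>v N" if "j < d" for j
  proof -
    have c: "col P j \<in> carrier_vec N" using Pc by (simp add: carrier_vecI)
    show ?thesis unfolding ker'[OF c]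
      using that dN Pc by (auto simp: P_def modN)
  qed
  have Bz: "B $$ (i,j) = 0" if "i < d + k" "j < d" for i j
  proof -
    have jN: "j < N" using that dN by simp
    have "col (F * P) j = 0\<^sub>v N" using col_mult2[OF F' Pc jN] colP_ker[OF that(2)] by simp
    moreover have "B$$(i,j) = row Q i \<bullet> col (F*P) j"
      unfolding B_def using Qc FPc that jN Nk by (subst index_mult_mat) auto
    moreover have "row Q i \<in> carrier_vec N" using Qc by (simp add: row_def)
    ultimately show ?thesis by simp
  qed
  have Bc': "B \<in> carrier_mat (d+k) (d+k)" using Bc Nk by simp
  define G where "G = mat k k (\<lambda>(i,j). B$$(d+i,d+j))"
  have cpB: "char_poly F = monom 1 d * char_poly G"
    unfolding char_poly_similar[OF sim] G_def by (rule char_poly_block_zero_cols[OF Bc' Bz])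
  have Gc: "G \<in> carrier_mat k k" by (simp add: G_def)
  have noev: "\<not> eigenvalue G 0"
  proof
    assume "eigenvalue G 0"
    have sz: "0 \<cdot>\<^sub>v v = 0\<^sub>v (dim_vec v)" for v :: "real vec" by (intro eq_vecI) auto
    then obtain v where v: "v \<in> carrier_vec k" "v \<noteq> 0\<^sub>v k" "G *\<^sub>v v = 0\<^sub>v k"
      using \<open>eigenvalue G 0\<close> unfolding eigenvalue_def eigenvector_def using Gc by (auto simp: sz)
    define y where "y = vec N (\<lambda>q. if q < d then 0 else v$(q-d))"
    have yc: "y \<in> carrier_vec N" by (simp add: y_def)
    define z where "z = B *\<^sub>v y"
    have zc: "z \<in> carrier_vec N" unfolding z_def by (rule mult_mat_vec_carrier[OF Bc yc])
    have zhi: "z$(d+i) = 0" if "i < k" for i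
    proof -
      have "z$(d+i) = (\<Sum>j<d+k. B$$(d+i,j) * y$j)"
        using that Bc Nk yc by (simp add: z_def scalar_prod_def atLeast0LessThan)
      also have "\<dots> = (\<Sum>j<k. B$$(d+i,d+j) * v$j)"
        unfolding sum_split_add using that Nk by (simp add: y_def Bz)
      also have "\<dots> = (G *\<^sub>v v) $ i"
        using that v(1) by (simp add: G_def scalar_prod_def atLeast0LessThan)
      finally show ?thesis using v that by simp
    qed
    define w where "w = P *\<^sub>v y"
    define u where "u = P *\<^sub>v z"
    have wc: "w \<in> carrier_vec N" and uc: "u \<in> carrier_vec N"
      unfolding w_def u_def by (rule mult_mat_vec_carrier[OF Pc yc], rule mult_mat_vec_carrier[OF Pc zc])
    have Fw: "F *\<^sub>v w = u"
    proof -
      have "u = P *\<^sub>v (Q *\<^sub>v (F *\<^sub>v (P *\<^sub>v y)))"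
        unfolding u_def z_def B_def
        using assoc_mult_mat_vec[OF Qc FPc yc] assoc_mult_mat_vec[OF F' Pc yc] by simp
      also have "\<dots> = (P * Q) *\<^sub>v (F *\<^sub>v (P *\<^sub>v y))"
        using assoc_mult_mat_vec[OF Pc Qc mult_mat_vec_carrier[OF F' wc[unfolded w_def]]] by simp
      also have "\<dots> = F *\<^sub>v w" unfolding PQ w_def
        using one_mult_mat_vec[OF mult_mat_vec_carrier[OF F' wc[unfolded w_def]]] .
      finally show ?thesis by simp
    qed
    have ue: "u$q = z$(q mod d)" if "q < N" for q
    proof -
      have "u$q = (\<Sum>l<N. P$$(q,l) * z$l)" using that Pc zc by (simp add: u_def scalar_prod_def atLeast0LessThan)
      also have "\<dots> = (\<Sum>l<N. (if l = q mod d then 1 else 0) * z$l) + (\<Sum>l<N. (if d \<le> q \<and> l = q then 1 else 0) * z$l)"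
        using that by (simp add: Pe distrib_right sum.distrib)
      also have "\<dots> = z$(q mod d) + (if d \<le> q then z$q else 0)"
        using that modN by (cases "d \<le> q") (simp_all add: sdel)
      also have "\<dots> = z$(q mod d)"
      proof (cases "d \<le> q")
        case True
        have "q = d + (q - d)" "q - d < k" using True that Nk by auto
        thus ?thesis using zhi[of "q - d"] True by simp
      qed simp
      finally show ?thesis .
    qed
    have Fu: "F *\<^sub>v u = 0\<^sub>v N" unfolding ker'[OF uc]
      using ue modN by simp
    have "u \<bullet> u = u \<bullet> (F *\<^sub>v w)" using Fw by simp
    also have "\<dots> = (transpose_mat F *\<^sub>v u) \<bullet> w" using transpose_vec_mult_scalar[OF F' wc uc] by simp
    also have "\<dots> = 0" unfolding sym Fu using wc by simp
    finally have u0: "u = 0\<^sub>v N" by (rule self_scalar_zero[OF uc])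
    have Fw0: "F *\<^sub>v w = 0\<^sub>v N" using Fw u0 by simp
    have wlo: "w$q = 0" if "q < d" for q
    proof -
      have qN: "q < N" using that dN by simp
      have "w$q = (\<Sum>l<N. P$$(q,l) * y$l)" using qN Pc yc by (simp add: w_def scalar_prod_def atLeast0LessThan)
      also have "\<dots> = (\<Sum>l<N. (if l = q then 1 else 0) * y$l)"
        using qN that by (intro sum.cong refl) (simp add: Pe)
      also have "\<dots> = y$q" using qN by (simp add: sdel)
      finally show ?thesis using that qN by (simp add: y_def)
    qed
    have w0: "w = 0\<^sub>v N"
    proof (rule eq_vecI)
      fix q assume "q < dim_vec (0\<^sub>v N :: real vec)"
      hence q: "q < N" by simp
      have "w$q = w$(q mod d)" using Fw0 ker'[OF wc] q by auto
      also have "\<dots> = 0" using wlo d by simp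
      finally show "w $ q = 0\<^sub>v N $ q" using q by simp
    qed (use wc in auto)
    have "y = (Q * P) *\<^sub>v y" unfolding QP using one_mult_mat_vec[OF yc] by simp
    also have "\<dots> = Q *\<^sub>v w" unfolding w_def by (rule assoc_mult_mat_vec[OF Qc Pc yc])
    also have "\<dots> = 0\<^sub>v N" unfolding w0 using Qc by (intro eq_vecI) auto
    finally have y0: "y = 0\<^sub>v N" .
    have "v = 0\<^sub>v k"
    proof (rule eq_vecI)
      fix i assume "i < dim_vec (0\<^sub>v k :: real vec)"
      hence i: "i < k" by simp
      have "y$(d+i) = v$i" using i Nk by (simp add: y_def)
      thus "v $ i = 0\<^sub>v k $ i" using y0 i Nk by simp
    qed (use v in auto)
    thus False using v by simp
  qed
  have cG0: "poly (char_poly G) 0 \<noteq> 0" using noev eigenvalue_root_char_poly[OF Gc] by simp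
  have cGnz: "char_poly G \<noteq> 0" using cG0 by auto
  have mnz: "monom 1 d \<noteq> (0 :: real poly)" by simp
  have "Polynomial.order 0 (char_poly F) = Polynomial.order 0 (monom (1::real) d) + Polynomial.order 0 (char_poly G)"
    unfolding cpB by (rule order_mult) (use cGnz mnz in simp)
  also have "Polynomial.order 0 (monom (1::real) d) = d"
    using order_power_n_n[of "0::real" d] by (simp add: x_as_monom monom_power)
  also have "Polynomial.order 0 (char_poly G) = 0" by (rule order_0I[OF cG0])
  finally show ?thesis by simp
qed

lemma K_carrier: "kron (laplacian n Eo) (1\<^sub>m d) \<in> carrier_mat (n*d) (n*d)"
  by (simp add: kron_def laplacian_def)

lemma K_sym: "transpose_mat (kron (laplacian n Eo) (1\<^sub>m d)) = kron (laplacian n Eo) (1\<^sub>m d)"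
proof (rule eq_matI)
  fix i j assume ij: "i < dim_row (kron (laplacian n Eo) (1\<^sub>m d))" "j < dim_col (kron (laplacian n Eo) (1\<^sub>m d))"
  hence i: "i < n*d" and j: "j < n*d" by (auto simp: kron_def laplacian_def)
  have d: "0 < d" using i by (cases d) auto
  have id: "i div d < n" "j div d < n" using i j d by (auto simp: less_mult_imp_div_less)
  have "laplacian n Eo $$ (j div d, i div d) = laplacian n Eo $$ (i div d, j div d)"
    using id unfolding laplacian_def by (auto simp: adj_o_def)
  thus "transpose_mat (kron (laplacian n Eo) (1\<^sub>m d)) $$ (i, j) = kron (laplacian n Eo) (1\<^sub>m d) $$ (i, j)"
    using i j mod_less_divisor[OF d, of i] mod_less_divisor[OF d, of j] by (auto simp: kron_def laplacian_def)
qed (auto simp: kron_def laplacian_def)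

lemma K_quad:
  assumes x: "x \<in> carrier_vec (n*d)" and d: "0 < d"
  shows "x \<bullet> (kron (laplacian n Eo) (1\<^sub>m d) *\<^sub>v x) =
    (\<Sum>a<d. \<Sum>i<n. x$(i*d+a) * (\<Sum>j<n. laplacian n Eo $$ (i,j) * x$(j*d+a)))"
proof -
  have "x \<bullet> (kron (laplacian n Eo) (1\<^sub>m d) *\<^sub>v x) =
     (\<Sum>q<n*d. x$q * (\<Sum>j<n. laplacian n Eo $$ (q div d, j) * x$(j*d + q mod d)))"
    unfolding kron_I_mult[OF laplacian_carrier x d] using x
    by (simp add: scalar_prod_def atLeast0LessThan)
  also have "\<dots> = (\<Sum>i<n. \<Sum>a<d. x$(i*d+a) * (\<Sum>j<n. laplacian n Eo $$ (i,j) * x$(j*d+a)))"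
    unfolding sum_blocks by simp
  also have "\<dots> = (\<Sum>a<d. \<Sum>i<n. x$(i*d+a) * (\<Sum>j<n. laplacian n Eo $$ (i,j) * x$(j*d+a)))"
    by (rule sum.swap)
  finally show ?thesis .
qed

lemma ones_mult:
  assumes c: "c \<in> carrier_vec d"
  shows "ones_kron_I n d *\<^sub>v c = vec (n*d) (\<lambda>q. c $ (q mod d))"
proof (rule eq_vecI)
  fix q assume "q < dim_vec (vec (n*d) (\<lambda>q. c $ (q mod d)))"
  hence q: "q < n*d" by simp
  have d: "0 < d" using q by (cases d) auto
  have "(ones_kron_I n d *\<^sub>v c) $ q = (\<Sum>j<d. (if q mod d = j then 1 else 0) * c$j)"
    using q c d by (simp add: ones_kron_I_def kron_def scalar_prod_def atLeast0LessThan less_mult_imp_div_less)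
  also have "\<dots> = (\<Sum>j<d. if j = q mod d then c$j else 0)" by (intro sum.cong) auto
  also have "\<dots> = c $ (q mod d)" using d by (simp add: sum.delta)
  finally show "(ones_kron_I n d *\<^sub>v c) $ q = vec (n*d) (\<lambda>q. c $ (q mod d)) $ q" using q by simp
qed (simp add: ones_kron_I_def kron_def)

lemma scalar_self_nonneg: "0 \<le> (v :: real vec) \<bullet> v"
  unfolding scalar_prod_def by (intro sum_nonneg) auto

theorem lemma5:
  fixes d n i0 :: nat and E :: "(nat \<times> nat) list" and Eo :: "(nat \<times> nat) set"
    and dist :: "nat \<Rightarrow> nat \<Rightarrow> real" and dv :: "nat \<Rightarrow> nat \<Rightarrow> real vec"
    and pt :: "real vec"
  assumes d: "d = 2 \<or> d = 3" and n: "n \<ge> 2"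
    and E_wf: "\<forall>(i,j) \<in> set E. i < n \<and> j < n \<and> i \<noteq> j"
    and E_simple: "distinct (map (\<lambda>(i,j). {i,j}) E)"
    and dist_sym: "\<forall>i j. dist i j = dist j i"
    and dist_pos: "\<forall>(i,j) \<in> set E. dist i j > 0"
    and Eo_sub: "\<forall>(i,j) \<in> Eo. (i,j) \<in> set E \<or> (j,i) \<in> set E"
    and dv_dim: "\<forall>(i,j) \<in> Eo. dv i j \<in> carrier_vec d"
    and dv_norm: "\<forall>(i,j) \<in> Eo. vnorm (dv i j) = dist i j"
    and pt_dim: "pt \<in> carrier_vec (d * n)"
    and pt_dist: "\<forall>(i,j) \<in> set E. vnorm (agent_pos d pt i - agent_pos d pt j) = dist i j"
    and pt_orient: "\<forall>(i,j) \<in> Eo. agent_pos d pt j - agent_pos d pt i = dv i j"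
    and rigid: "inf_rigid d n E pt"
    and i0: "i0 < n"
    and Eo_star: "\<forall>(i,j) \<in> Eo. i = i0 \<or> j = i0"
    and Eo_2: "d = 2 \<longrightarrow> Eo \<noteq> {}"
    and Eo_3: "d = 3 \<longrightarrow> (\<exists>a b a' b'. (a,b) \<in> Eo \<and> (a',b') \<in> Eo \<and> i0 \<in> {a,b} \<and> i0 \<in> {a',b'} \<and>
                     lin_indep2 (dv a b) (dv a' b'))"
  shows "let R = rigidity_matrix d n E pt;
             F = transpose_mat R * R + kron (laplacian n Eo) (1\<^sub>m d)
         in psd F \<and> Polynomial.order 0 (char_poly F) = d \<and>
            mat_kernel F = mat_kernel (kron (incidence n E) (1\<^sub>m d)) \<and>
            mat_kernel F = {ones_kron_I n d *\<^sub>v c | c. c \<in> carrier_vec d}"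
proof -
  define R where "R = rigidity_matrix d n E pt"
  define K where "K = kron (laplacian n Eo) (1\<^sub>m d)"
  define F where "F = transpose_mat R * R + K"
  define M where "M = kron (incidence n E) (1\<^sub>m d)"
  define m where "m = length E"
  define T where "T = (\<lambda>x :: real vec. \<forall>q<n*d. x$q = x$(q mod d))"
  have d0: "0 < d" using d by auto
  have n1: "1 \<le> n" using n by simp
  have Rc: "R \<in> carrier_mat m (n*d)" unfolding R_def m_def by (rule R_carrier)
  have RTc: "transpose_mat R \<in> carrier_mat (n*d) m" using Rc by simp
  have Kc: "K \<in> carrier_mat (n*d) (n*d)" unfolding K_def by (rule K_carrier)
  have RRc: "transpose_mat R * R \<in> carrier_mat (n*d) (n*d)" using RTc Rc by simp
  have Fc: "F \<in> carrier_mat (n*d) (n*d)" unfolding F_def using RRc Kc by simp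
  have Mc: "M \<in> carrier_mat (m*d) (n*d)" by (simp add: M_def m_def kron_def incidence_def)
  have Fsym: "transpose_mat F = F"
    unfolding F_def transpose_add[OF RRc Kc] transpose_mult[OF RTc Rc]
    by (simp add: K_def K_sym)
  have Fmult: "F *\<^sub>v x = transpose_mat R *\<^sub>v (R *\<^sub>v x) + K *\<^sub>v x" if x: "x \<in> carrier_vec (n*d)" for x
    unfolding F_def add_mult_distrib_mat_vec[OF RRc Kc x] assoc_mult_mat_vec[OF RTc Rc x] ..
  define Qf where "Qf = (\<lambda>x a. (\<Sum>i<n. x$(i*d+a) * (\<Sum>j<n. laplacian n Eo $$ (i,j) * x$(j*d+a))))"
  have quad: "x \<bullet> (F *\<^sub>v x) = (R *\<^sub>v x) \<bullet> (R *\<^sub>v x) + (\<Sum>a<d. Qf x a)"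
    if x: "x \<in> carrier_vec (n*d)" for x
  proof -
    have Rx: "R *\<^sub>v x \<in> carrier_vec m" using Rc x by simp
    have c1: "transpose_mat R *\<^sub>v (R *\<^sub>v x) \<in> carrier_vec (n*d)" using RTc Rx by simp
    have c2: "K *\<^sub>v x \<in> carrier_vec (n*d)" using Kc x by simp
    have "x \<bullet> (F *\<^sub>v x) = x \<bullet> (transpose_mat R *\<^sub>v (R *\<^sub>v x)) + x \<bullet> (K *\<^sub>v x)"
      unfolding Fmult[OF x] by (rule scalar_prod_add_distrib[OF x c1 c2])
    also have "x \<bullet> (transpose_mat R *\<^sub>v (R *\<^sub>v x)) = (R *\<^sub>v x) \<bullet> (R *\<^sub>v x)"
      using comm_scalar_prod[OF x c1] transpose_vec_mult_scalar[OF Rc x Rx] by simp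
    also have "x \<bullet> (K *\<^sub>v x) = (\<Sum>a<d. Qf x a)"
      unfolding K_def Qf_def by (rule K_quad[OF x d0])
    finally show ?thesis .
  qed
  have Qnn: "0 \<le> Qf x a" for x a unfolding Qf_def by (rule lap_quad_nonneg)
  have psdF: "psd F"
    unfolding psd_def
  proof (intro conjI ballI)
    show "F \<in> carrier_mat (dim_row F) (dim_row F)" using Fc by simp
    show "transpose_mat F = F" by (rule Fsym)
    fix x :: "real vec" assume "x \<in> carrier_vec (dim_row F)"
    hence x: "x \<in> carrier_vec (n*d)" using Fc by simp
    show "0 \<le> x \<bullet> (F *\<^sub>v x)" unfolding quad[OF x]
      using scalar_self_nonneg[of "R *\<^sub>v x"] sum_nonneg[of "{..<d}" "Qf x", OF Qnn] by linarith
  qed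
  have Fker: "R *\<^sub>v x = 0\<^sub>v m \<and> (\<forall>a<d. \<forall>i<n. \<forall>j<n. adj_o Eo i j \<longrightarrow> x$(i*d+a) = x$(j*d+a))"
    if x: "x \<in> carrier_vec (n*d)" and Fx: "F *\<^sub>v x = 0\<^sub>v (n*d)" for x
  proof -
    have "x \<bullet> (F *\<^sub>v x) = 0" using Fx x by simp
    hence z: "(R *\<^sub>v x) \<bullet> (R *\<^sub>v x) + (\<Sum>a<d. Qf x a) = 0" using quad[OF x] by simp
    have s1: "(R *\<^sub>v x) \<bullet> (R *\<^sub>v x) = 0" and s2: "(\<Sum>a<d. Qf x a) = 0"
      using z scalar_self_nonneg[of "R *\<^sub>v x"] sum_nonneg[of "{..<d}" "Qf x", OF Qnn] by linarith+
    have Rx: "R *\<^sub>v x \<in> carrier_vec m" using Rc x by simp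
    have "R *\<^sub>v x = 0\<^sub>v m" by (rule self_scalar_zero[OF Rx s1])
    moreover have "\<forall>a<d. \<forall>i<n. \<forall>j<n. adj_o Eo i j \<longrightarrow> x$(i*d+a) = x$(j*d+a)"
    proof (intro allI impI)
      fix a i j assume a: "a < d" and ij: "i < n" "j < n" "adj_o Eo i j"
      have "\<forall>a\<in>{..<d}. Qf x a = 0" using s2 by (subst (asm) sum_nonneg_eq_0_iff) (auto intro: Qnn)
      hence "Qf x a = 0" using a by simp
      thus "x$(i*d+a) = x$(j*d+a)" unfolding Qf_def
        using lap_quad_zero[where y="\<lambda>i. x$(i*d+a)" and n=n and Eo=Eo and i=i and j=j] ij by simp
    qed
    ultimately show ?thesis by simp
  qed
  have Eo_in: "a < n \<and> b < n \<and> a \<noteq> b" if "(a,b) \<in> Eo" for a b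
    using Eo_sub E_wf that by fastforce
  have Eo_adj: "adj_o Eo a b" if "(a,b) \<in> Eo" for a b
    using Eo_in[OF that] that unfolding adj_o_def by auto
  have core: "\<forall>i<n. \<forall>e<d. x$(i*d+e) = x$(i0*d+e)"
    if x: "x \<in> carrier_vec (n*d)" and Rx: "R *\<^sub>v x = 0\<^sub>v m"
      and eo: "\<forall>(a,b)\<in>Eo. \<forall>e<d. x$(a*d+e) = x$(b*d+e)" for x
  proof -
    have endp: "(\<forall>e<d. x$(a*d+e) = x$(i0*d+e)) \<and> (\<forall>e<d. x$(b*d+e) = x$(i0*d+e))"
      if "(a,b) \<in> Eo" for a b
      using eo that Eo_star by fastforce
    from d show ?thesis
    proof
      assume d2: "d = 2"
      obtain a b where ab: "(a,b) \<in> Eo" using Eo_2 d2 by auto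
      note abn = Eo_in[OF ab]
      have dpos: "dist a b > 0" using Eo_sub ab dist_pos dist_sym by fastforce
      have diff: "pt$(b*2) - pt$(a*2) \<noteq> 0 \<or> pt$(b*2+1) - pt$(a*2+1) \<noteq> 0"
      proof (rule ccontr)
        assume "\<not> ?thesis"
        hence eqc: "pt$(b*2+e) = pt$(a*2+e)" if "e < 2" for e
          using that by (cases e) (auto simp: less_Suc_eq)
        have z1: "agent_pos d pt a - agent_pos d pt b = 0\<^sub>v d"
          by (rule eq_vecI) (use eqc d2 in \<open>auto simp: agent_pos_def\<close>)
        have z2: "agent_pos d pt b - agent_pos d pt a = 0\<^sub>v d"
          by (rule eq_vecI) (use eqc d2 in \<open>auto simp: agent_pos_def\<close>)
        have vz: "vnorm (0\<^sub>v d) = 0" by (simp add: vnorm_def)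
        have "vnorm (agent_pos d pt a - agent_pos d pt b) = dist a b \<or>
              vnorm (agent_pos d pt b - agent_pos d pt a) = dist a b"
          using Eo_sub ab pt_dist dist_sym by fastforce
        thus False using z1 z2 vz dpos by auto
      qed
      have x2: "x \<in> carrier_vec (n*2)" using x d2 by simp
      have Rx2: "rigidity_matrix 2 n E pt *\<^sub>v x = 0\<^sub>v (length E)" using Rx d2 by (simp add: R_def m_def)
      have rk2: "vec_space.rank (length E) (rigidity_matrix 2 n E pt) = 2*n - 3"
        using rigid d2 by (simp add: inf_rigid_def)
      have "\<forall>i<n. \<forall>e<2. x$(i*2+e) = x$(i0*2+e)"
        by (rule core2[OF E_wf x2 Rx2 rk2 _ _ diff]) (use abn endp[OF ab] d2 in auto)
      thus ?thesis using d2 by simp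
    next
      assume d3: "d = 3"
      obtain a b a' b' where ab: "(a,b) \<in> Eo" "(a',b') \<in> Eo" "lin_indep2 (dv a b) (dv a' b')"
        using Eo_3 d3 by blast
      note abn = Eo_in[OF ab(1)] Eo_in[OF ab(2)]
      have dva: "dv a b = agent_pos 3 pt b - agent_pos 3 pt a" "dv a' b' = agent_pos 3 pt b' - agent_pos 3 pt a'"
        using pt_orient ab d3 by auto
      have ind: "\<alpha> = 0 \<and> \<beta> = 0"
        if h: "\<And>e. e < 3 \<Longrightarrow> \<alpha>*(pt$(b*3+e) - pt$(a*3+e)) + \<beta>*(pt$(b'*3+e) - pt$(a'*3+e)) = 0" for \<alpha> \<beta>
      proof -
        have "\<alpha> \<cdot>\<^sub>v dv a b + \<beta> \<cdot>\<^sub>v dv a' b' = 0\<^sub>v (dim_vec (dv a b))"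
          unfolding dva by (rule eq_vecI) (use h in \<open>auto simp: agent_pos_def\<close>)
        thus ?thesis using ab(3) unfolding lin_indep2_def by blast
      qed
      have x3: "x \<in> carrier_vec (n*3)" using x d3 by simp
      have Rx3: "rigidity_matrix 3 n E pt *\<^sub>v x = 0\<^sub>v (length E)" using Rx d3 by (simp add: R_def m_def)
      have rk3: "vec_space.rank (length E) (rigidity_matrix 3 n E pt) = 3*n - 6"
        using rigid d3 by (simp add: inf_rigid_def)
      have "\<forall>i<n. \<forall>e<3. x$(i*3+e) = x$(i0*3+e)"
      proof -
        have l: "a < n" "b < n" "a' < n" "b' < n" using abn by auto
        have e1: "\<forall>e<3. x$(a*3+e) = x$(i0*3+e)" "\<forall>e<3. x$(b*3+e) = x$(i0*3+e)"
          using endp[OF ab(1)] d3 by auto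
        have e2: "\<forall>e<3. x$(a'*3+e) = x$(i0*3+e)" "\<forall>e<3. x$(b'*3+e) = x$(i0*3+e)"
          using endp[OF ab(2)] d3 by auto
        show ?thesis using core3[OF E_wf x3 Rx3 rk3 n l ind e1 e2] by blast
      qed
      thus ?thesis using d3 by simp
    qed
  qed
  have qdec: "q div d < n" "q mod d < d" "(q div d)*d + q mod d = q" if "q < n*d" for q
  proof -
    show "q div d < n" using that by (simp add: less_mult_imp_div_less)
    show "q mod d < d" using d0 by simp
    show "(q div d)*d + q mod d = q" by simp
  qed
  have core_T: "T x"
    if x: "x \<in> carrier_vec (n*d)" and Rx: "R *\<^sub>v x = 0\<^sub>v m"
      and eo: "\<forall>(a,b)\<in>Eo. \<forall>e<d. x$(a*d+e) = x$(b*d+e)" for x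
    unfolding T_def
  proof (intro allI impI)
    fix q assume q: "q < n*d"
    note c = core[OF x Rx eo]
    have "x$q = x$((q div d)*d + q mod d)" using qdec[OF q] by simp
    also have "\<dots> = x$(i0*d + q mod d)" using c[rule_format, OF qdec(1)[OF q] qdec(2)[OF q]] .
    also have "\<dots> = x$(0*d + q mod d)"
    proof -
      have "0 < n" using n1 by simp
      then have "x$(0*d + q mod d) = x$(i0*d + q mod d)" by (rule c[rule_format, OF _ qdec(2)[OF q]])
      thus ?thesis by simp
    qed
    finally show "x$q = x$(q mod d)" by simp
  qed
  have T_blk: "x$(i*d+a) = x$a" if "T x" "i < n" "a < d" for x i a
  proof -
    have "i*d+a < n*d" using blk_less that by auto
    hence "x$(i*d+a) = x$((i*d+a) mod d)" using that(1) unfolding T_def by blast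
    thus ?thesis using that by simp
  qed
  have T_R: "R *\<^sub>v x = 0\<^sub>v m" if x: "x \<in> carrier_vec (n*d)" and T: "T x" for x
  proof -
    have "R *\<^sub>v x = vec m (\<lambda>k. \<Sum>a<d. edge_vec d E pt k $ a * (x$(snd(E!k)*d + a) - x$(fst(E!k)*d + a)))"
      unfolding R_def m_def by (rule R_mult[OF E_wf x d0])
    also have "\<dots> = 0\<^sub>v m"
    proof (rule eq_vecI)
      fix k assume "k < dim_vec (0\<^sub>v m :: real vec)"
      hence k: "k < m" by simp
      hence "E!k \<in> set E" unfolding m_def by simp
      hence w: "fst (E!k) < n" "snd (E!k) < n" using E_wf by auto
      show "vec m (\<lambda>k. \<Sum>a<d. edge_vec d E pt k $ a * (x$(snd(E!k)*d + a) - x$(fst(E!k)*d + a))) $ k = 0\<^sub>v m $ k"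
        using k w T_blk[OF T] by simp
    qed simp
    finally show ?thesis .
  qed
  have T_K: "K *\<^sub>v x = 0\<^sub>v (n*d)" if x: "x \<in> carrier_vec (n*d)" and T: "T x" for x
  proof -
    have "K *\<^sub>v x = vec (n*d) (\<lambda>q. \<Sum>i<n. laplacian n Eo $$ (q div d, i) * x$(i*d + q mod d))"
      unfolding K_def by (rule kron_I_mult[OF laplacian_carrier x d0])
    also have "\<dots> = 0\<^sub>v (n*d)"
    proof (rule eq_vecI)
      fix q assume "q < dim_vec (0\<^sub>v (n*d) :: real vec)"
      hence q: "q < n*d" by simp
      have "(\<Sum>i<n. laplacian n Eo $$ (q div d, i) * x$(i*d + q mod d)) =
            (\<Sum>i<n. laplacian n Eo $$ (q div d, i) * (\<lambda>_. x$(q mod d)) i)"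
        using T_blk[OF T] qdec[OF q] by (intro sum.cong) auto
      also have "\<dots> = 0" unfolding lap_row[OF qdec(1)[OF q]] by simp
      finally show "vec (n*d) (\<lambda>q. \<Sum>i<n. laplacian n Eo $$ (q div d, i) * x$(i*d + q mod d)) $ q = 0\<^sub>v (n*d) $ q"
        using q by simp
    qed simp
    finally show ?thesis .
  qed
  have Fiff: "(F *\<^sub>v x = 0\<^sub>v (n*d)) \<longleftrightarrow> T x" if x: "x \<in> carrier_vec (n*d)" for x
  proof
    assume Fx: "F *\<^sub>v x = 0\<^sub>v (n*d)"
    note fk = Fker[OF x Fx]
    show "T x"
    proof (rule core_T[OF x])
      show "R *\<^sub>v x = 0\<^sub>v m" using fk by simp
      show "\<forall>(a,b)\<in>Eo. \<forall>e<d. x$(a*d+e) = x$(b*d+e)"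
        using fk Eo_in Eo_adj by blast
    qed
  next
    assume T: "T x"
    have "transpose_mat R *\<^sub>v 0\<^sub>v m = 0\<^sub>v (n*d)"
      by (rule eq_vecI) (use RTc in \<open>auto simp: scalar_prod_def\<close>)
    thus "F *\<^sub>v x = 0\<^sub>v (n*d)" unfolding Fmult[OF x] T_R[OF x T] T_K[OF x T] by simp
  qed
  have Miff: "(M *\<^sub>v x = 0\<^sub>v (m*d)) \<longleftrightarrow> T x" if x: "x \<in> carrier_vec (n*d)" for x
  proof -
    have Mx: "M *\<^sub>v x = vec (m * d) (\<lambda>q. x$(snd(E!(q div d))*d + q mod d) - x$(fst(E!(q div d))*d + q mod d))"
      unfolding M_def m_def by (rule M_mult[OF E_wf x d0])
    show ?thesis
    proof
      assume M0: "M *\<^sub>v x = 0\<^sub>v (m*d)"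
      have eqe: "x$(snd(E!k)*d + a) = x$(fst(E!k)*d + a)" if "k < m" "a < d" for k a
      proof -
        have "k*d + a < m*d" using blk_less that by auto
        hence "(M *\<^sub>v x) $ (k*d+a) = 0" using M0 by simp
        thus ?thesis unfolding Mx using \<open>k*d + a < m*d\<close> that by simp
      qed
      show "T x"
      proof (rule core_T[OF x])
        show "R *\<^sub>v x = 0\<^sub>v m"
          unfolding R_def m_def R_mult[OF E_wf x d0] using eqe unfolding m_def
          by (intro eq_vecI) auto
        show "\<forall>(a,b)\<in>Eo. \<forall>e<d. x$(a*d+e) = x$(b*d+e)"
        proof (intro ballI allI impI, clarify)
          fix a b e assume ab: "(a,b) \<in> Eo" and e: "e < d"
          from Eo_sub ab have "(a,b) \<in> set E \<or> (b,a) \<in> set E" by auto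
          thus "x$(a*d+e) = x$(b*d+e)"
          proof
            assume "(a,b) \<in> set E"
            then obtain k where "k < m" "E!k = (a,b)" unfolding m_def by (auto simp: in_set_conv_nth)
            thus ?thesis using eqe[of k e] e by simp
          next
            assume "(b,a) \<in> set E"
            then obtain k where "k < m" "E!k = (b,a)" unfolding m_def by (auto simp: in_set_conv_nth)
            thus ?thesis using eqe[of k e] e by simp
          qed
        qed
      qed
    next
      assume T: "T x"
      show "M *\<^sub>v x = 0\<^sub>v (m*d)" unfolding Mx
      proof (rule eq_vecI)
        fix q assume "q < dim_vec (0\<^sub>v (m*d) :: real vec)"
        hence q: "q < m*d" by simp
        hence "q div d < m" by (simp add: less_mult_imp_div_less)
        hence "E!(q div d) \<in> set E" unfolding m_def by simp
        hence w: "fst (E!(q div d)) < n" "snd (E!(q div d)) < n" using E_wf by auto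
        have "q mod d < d" using d0 by simp
        thus "vec (m * d) (\<lambda>q. x$(snd(E!(q div d))*d + q mod d) - x$(fst(E!(q div d))*d + q mod d)) $ q = 0\<^sub>v (m*d) $ q"
          using q w T_blk[OF T] by simp
      qed simp
    qed
  qed
  have kerF: "mat_kernel F = {x \<in> carrier_vec (n*d). T x}"
    unfolding mat_kernel[OF Fc] using Fiff by auto
  have kerM: "mat_kernel M = {x \<in> carrier_vec (n*d). T x}"
    unfolding mat_kernel[OF Mc] using Miff by auto
  have ones: "{ones_kron_I n d *\<^sub>v c | c. c \<in> carrier_vec d} = {x \<in> carrier_vec (n*d). T x}"
  proof (intro equalityI subsetI)
    fix x assume "x \<in> {ones_kron_I n d *\<^sub>v c | c. c \<in> carrier_vec d}"
    then obtain c where c: "c \<in> carrier_vec d" and xc: "x = ones_kron_I n d *\<^sub>v c" by auto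
    show "x \<in> {x \<in> carrier_vec (n*d). T x}"
      unfolding xc ones_mult[OF c] T_def
      using le_less_trans[OF mod_less_eq_dividend] by simp
  next
    fix x assume "x \<in> {x \<in> carrier_vec (n*d). T x}"
    hence x: "x \<in> carrier_vec (n*d)" and T: "T x" by auto
    define c where "c = vec d (\<lambda>a. x$a)"
    have c: "c \<in> carrier_vec d" by (simp add: c_def)
    have "x = ones_kron_I n d *\<^sub>v c"
      unfolding ones_mult[OF c]
    proof (rule eq_vecI)
      fix q assume "q < dim_vec (vec (n * d) (\<lambda>q. c $ (q mod d)))"
      hence q: "q < n*d" by simp
      have "x$q = x$(q mod d)" using T q unfolding T_def by blast
      thus "x $ q = vec (n * d) (\<lambda>q. c $ (q mod d)) $ q" using q d0 by (simp add: c_def)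
    qed (use x in simp)
    thus "x \<in> {ones_kron_I n d *\<^sub>v c | c. c \<in> carrier_vec d}" using c by blast
  qed
  have ord: "Polynomial.order 0 (char_poly F) = d"
    by (rule order_kernel[OF Fc Fsym d0 n1]) (use Fiff in \<open>simp add: T_def\<close>)
  show ?thesis
    unfolding Let_def R_def[symmetric] K_def[symmetric] F_def[symmetric] M_def[symmetric]
    using psdF ord kerF kerM ones by simp
qed

end
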